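(* There exists a linear bijection $f:\mathbb{R}^2\to\mathbb{C}$ of real vector spaces such that $f(\mathcal{E})=\mathcal{R}$ and $f(\mathbb{Z}^2)=\mathbb{Z}+\mathbb{Z}\alpha$.
   Context: Let $a,b$ be integers with $-a+1\le b\le -2$, let $\beta$ be the real dominant root of $x^3-ax^2-bx-1$, and assume its conjugates $\alpha,\overline\alpha$ are non-real. Let $T_0=1$, $T_1=a$, $T_2=a^2+b$, $T_{n+3}=aT_{n+2}+bT_{n+1}+T_n$. Admissibility: a digit sequence with digits in $\{0,\dots,a-1\}$ is admissible if every block satisfies $d_jd_{j-1}\cdots d_{j-k}\le_{\mathrm{lex}}(a-1)(a+b-1)(a+b)\cdots(a+b)$ (same length). Each $N\in\mathbb{Z}^+$ has a unique admissible $T$-representation $N=\sum_j d_jT_j$. We write $\delta(N)=N(1/\beta,1/\beta^2)-(\sum_{j\ge1}d_jT_{j-1},\sum_{j\ge2}d_jT_{j-2})$, and $\mathcal{E}=\overline{\{\delta(N):N\in\mathbb{Z}^+\}}\subset\mathbb{R}^2$. The Rauzy fractal is $\mathcal{R}=\{\sum_{i\ge2}d_i\alpha^i:(d_i)_{i\ge2}\text{ admissible}\}\subset\mathbb{C}$. *)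

theory Defs
  imports "HOL-Analysis.Analysis"
begin

fun Tseq :: "int \<Rightarrow> int \<Rightarrow> nat \<Rightarrow> int" where
  "Tseq a b 0 = 1"
| "Tseq a b (Suc 0) = a"
| "Tseq a b (Suc (Suc 0)) = a^2 + b"
| "Tseq a b (Suc (Suc (Suc n))) =
     a * Tseq a b (Suc (Suc n)) + b * Tseq a b (Suc n) + Tseq a b n"

definition cmpword :: "int \<Rightarrow> int \<Rightarrow> nat \<Rightarrow> int" where
  "cmpword a b i = (if i = 0 then a - 1 else if i = 1 then a + b - 1 else a + b)"

definition lex_le :: "(nat \<Rightarrow> int) \<Rightarrow> (nat \<Rightarrow> int) \<Rightarrow> nat \<Rightarrow> bool" where
  "lex_le x y k \<longleftrightarrow> (\<forall>i\<le>k. x i = y i) \<or>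
     (\<exists>m\<le>k. (\<forall>i<m. x i = y i) \<and> x m < y m)"

definition admissible :: "int \<Rightarrow> int \<Rightarrow> nat \<Rightarrow> (nat \<Rightarrow> int) \<Rightarrow> bool" where
  "admissible a b lo d \<longleftrightarrow>
     (\<forall>j\<ge>lo. 0 \<le> d j \<and> d j \<le> a - 1) \<and>
     (\<forall>j k. lo + k \<le> j \<longrightarrow> lex_le (\<lambda>i. d (j - i)) (cmpword a b) k)"

definition Trep :: "int \<Rightarrow> int \<Rightarrow> nat \<Rightarrow> (nat \<Rightarrow> int) \<Rightarrow> bool" where
  "Trep a b N d \<longleftrightarrow> admissible a b 0 d \<and>
     (\<exists>n. (\<forall>j>n. d j = 0) \<and> int N = (\<Sum>j\<le>n. d j * Tseq a b j))"

definition Tdigits :: "int \<Rightarrow> int \<Rightarrow> nat \<Rightarrow> nat \<Rightarrow> int" where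
  "Tdigits a b N = (THE d. Trep a b N d)"

definition delta :: "int \<Rightarrow> int \<Rightarrow> real \<Rightarrow> nat \<Rightarrow> real \<times> real" where
  "delta a b \<beta> N =
     (let d = Tdigits a b N in
      (real N / \<beta> - real_of_int (\<Sum>j\<in>{j. 1 \<le> j \<and> d j \<noteq> 0}. d j * Tseq a b (j - 1)),
       real N / \<beta>^2 - real_of_int (\<Sum>j\<in>{j. 2 \<le> j \<and> d j \<noteq> 0}. d j * Tseq a b (j - 2))))"

definition Eset :: "int \<Rightarrow> int \<Rightarrow> real \<Rightarrow> (real \<times> real) set" where
  "Eset a b \<beta> = closure {delta a b \<beta> N | N. N \<ge> 1}"

definition Rauzy :: "int \<Rightarrow> int \<Rightarrow> complex \<Rightarrow> complex set" where
  "Rauzy a b \<alpha> = {(\<Sum>i. of_int (d (i + 2)) * \<alpha> ^ (i + 2)) | d. admissible a b 2 d}"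

end

theory Submission
  imports Defs
begin


definition Pp :: "int \<Rightarrow> int \<Rightarrow> nat \<Rightarrow> int" where
  "Pp a b n = (\<Sum>i<n. Tseq a b i)"

fun Wf :: "int \<Rightarrow> int \<Rightarrow> nat \<Rightarrow> nat \<Rightarrow> int" where
  "Wf a b s 0 = 0"
| "Wf a b s (Suc n) = cmpword a b s * Tseq a b n + Wf a b (Suc s) n"

definition Vd :: "int \<Rightarrow> int \<Rightarrow> (nat \<Rightarrow> int) \<Rightarrow> nat \<Rightarrow> int" where
  "Vd a b d n = (\<Sum>j<n. d j * Tseq a b j)"

lemma Vd_Suc: "Vd a b d (Suc n) = d n * Tseq a b n + Vd a b d n"
  by (simp add: Vd_def)

lemma Pp_Suc: "Pp a b (Suc n) = Pp a b n + Tseq a b n"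
  by (simp add: Pp_def)

lemma Tseq_Q: "(a-1) * Tseq a b (Suc n) + (a+b-1) * Tseq a b n + (a+b) * Pp a b n
   = Tseq a b (Suc (Suc n)) - 1"
proof (induction n)
  case 0
  then show ?case by (simp add: Pp_def algebra_simps power2_eq_square)
next
  case (Suc n)
  then show ?case by (simp add: Pp_Suc algebra_simps)
qed

context
  fixes a b :: int
  assumes ab1: "- a + 1 \<le> b" and ab2: "b \<le> -2"
begin

lemma a_ge3: "a \<ge> 3" using ab1 ab2 by linarith

lemma cw_nonneg: "cmpword a b s \<ge> 0"
  using ab1 ab2 by (auto simp: cmpword_def)

lemma cw_le: "cmpword a b s \<le> a - 1"
  using ab1 ab2 by (auto simp: cmpword_def)

lemma cw_Suc_less: "cmpword a b (Suc s) < a - 1"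
  using ab1 ab2 by (auto simp: cmpword_def)

lemma T_ge1: "Tseq a b n \<ge> 1"
proof (induction n rule: nat_less_induct)
  case (1 n)
  show ?case
  proof (cases n)
    case 0 then show ?thesis by simp
  next
    case (Suc m)
    show ?thesis
    proof (cases m)
      case 0 then show ?thesis using Suc a_ge3 by simp
    next
      case (Suc k)
      have h1: "Tseq a b (Suc k) \<ge> 1" "Tseq a b k \<ge> 1" using 1 \<open>n = Suc m\<close> Suc by auto
      have "Pp a b k \<ge> 0" unfolding Pp_def
        using 1 \<open>n = Suc m\<close> Suc by (intro sum_nonneg) (smt (verit) lessThan_iff less_Suc_eq)
      then have "(a-1) * Tseq a b (Suc k) + (a+b-1) * Tseq a b k + (a+b) * Pp a b k \<ge> 0"
      proof -
        have "(a-1) * Tseq a b (Suc k) \<ge> 0" "(a+b-1) * Tseq a b k \<ge> 0" "(a+b) * Pp a b k \<ge> 0"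
          using h1 a_ge3 ab1 \<open>Pp a b k \<ge> 0\<close> by auto
        then show ?thesis by linarith
      qed
      then show ?thesis using Tseq_Q[of a b k] \<open>n = Suc m\<close> Suc by simp
    qed
  qed
qed

lemma Pp_nonneg: "Pp a b n \<ge> 0"
  unfolding Pp_def using T_ge1 by (intro sum_nonneg) (meson order_trans zero_le_one)

lemma T_less_Suc: "Tseq a b n < Tseq a b (Suc n)"
proof (cases n)
  case 0 then show ?thesis using a_ge3 by simp
next
  case (Suc k)
  have "(a-1) * Tseq a b (Suc k) \<ge> 2 * Tseq a b (Suc k)"
    using a_ge3 T_ge1[of "Suc k"] by (intro mult_right_mono) auto
  moreover have "(a+b-1) * Tseq a b k \<ge> 0" "(a+b) * Pp a b k \<ge> 0"
    using ab1 T_ge1[of k] Pp_nonneg[of k] by auto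
  ultimately show ?thesis unfolding Suc using Tseq_Q[of a b k] T_ge1[of "Suc k"] by linarith
qed

lemma T_mono: "n \<le> m \<Longrightarrow> Tseq a b n \<le> Tseq a b m"
  by (induction m rule: dec_induct) (auto intro: order_trans less_imp_le T_less_Suc)

lemma T_gt: "Tseq a b n > int n"
proof (induction n)
  case 0 then show ?case by simp
next
  case (Suc n) then show ?case using T_less_Suc[of n] by simp
qed


lemma W_ge2: "s \<ge> 2 \<Longrightarrow> Wf a b s n = (a+b) * Pp a b n"
proof (induction n arbitrary: s)
  case 0 then show ?case by (simp add: Pp_def)
next
  case (Suc n)
  then show ?case by (simp add: Pp_Suc cmpword_def algebra_simps)
qed

lemma W0: "Wf a b 0 n = Tseq a b n - 1"
proof (cases n)
  case 0 then show ?thesis by simp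
next
  case (Suc m)
  show ?thesis
  proof (cases m)
    case 0 then show ?thesis using Suc by (simp add: cmpword_def)
  next
    case (Suc k)
    have "Wf a b 0 (Suc (Suc k)) = (a-1) * Tseq a b (Suc k) + (a+b-1) * Tseq a b k + (a+b) * Pp a b k"
      using W_ge2[of "Suc (Suc 0)" k] by (simp add: cmpword_def)
    then show ?thesis using Tseq_Q[of a b k] \<open>n = Suc m\<close> Suc by simp
  qed
qed

lemma W_nonneg: "Wf a b s n \<ge> 0"
proof (induction n arbitrary: s)
  case 0 then show ?case by simp
next
  case (Suc n)
  have "cmpword a b s * Tseq a b n \<ge> 0" using cw_nonneg T_ge1 by (meson order_trans zero_le_one zero_le_mult_iff)
  then show ?case using Suc[of "Suc s"] by simp
qed

lemma W_Suc_le: "Wf a b (Suc s) n \<le> Wf a b 0 n"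
proof -
  have A: "(a+b) * Pp a b n \<le> Wf a b 0 n" and B: "Wf a b 1 n \<le> Wf a b 0 n"
  proof -
    have "(a+b) * Pp a b n \<le> Wf a b 0 n \<and> Wf a b 1 n \<le> Wf a b 0 n"
    proof (cases n)
      case 0 then show ?thesis by (simp add: Pp_def)
    next
      case (Suc m)
      show ?thesis
      proof (cases m)
        case 0 then show ?thesis using Suc ab2 by (simp add: Pp_def cmpword_def)
      next
        case (Suc k)
        have e0: "Wf a b 0 n = (a-1) * Tseq a b (Suc k) + (a+b-1) * Tseq a b k + (a+b) * Pp a b k"
          using W_ge2[of "Suc (Suc 0)" k] \<open>n = Suc m\<close> Suc by (simp add: cmpword_def)
        have e1: "Wf a b 1 n = (a+b-1) * Tseq a b (Suc k) + (a+b) * Tseq a b k + (a+b) * Pp a b k"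
          using W_ge2[of "Suc (Suc (Suc 0))" k] \<open>n = Suc m\<close> Suc by (simp add: cmpword_def Pp_Suc algebra_simps)
        have e2: "(a+b) * Pp a b n = (a+b) * Tseq a b (Suc k) + (a+b) * Tseq a b k + (a+b) * Pp a b k"
          using \<open>n = Suc m\<close> Suc by (simp add: Pp_Suc algebra_simps)
        have t: "Tseq a b k \<le> Tseq a b (Suc k)" using T_less_Suc[of k] by simp
        have "(-b-1) * Tseq a b (Suc k) \<ge> 1 * Tseq a b (Suc k)"
          using ab2 T_ge1[of "Suc k"] by (intro mult_right_mono) auto
        then show ?thesis using e0 e1 e2 t T_ge1[of k] by (simp add: algebra_simps)
      qed
    qed
    then show "(a+b) * Pp a b n \<le> Wf a b 0 n" "Wf a b 1 n \<le> Wf a b 0 n" by auto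
  qed
  show ?thesis
  proof (cases s)
    case 0 then show ?thesis using B by simp
  next
    case (Suc s') then show ?thesis using A W_ge2[of "Suc s" n] by simp
  qed
qed

end


lemma lex_le_0: "lex_le x y k \<Longrightarrow> x 0 \<le> y 0"
  unfolding lex_le_def
proof (elim disjE exE conjE)
  assume "\<forall>i\<le>k. x i = y i" then show "x 0 \<le> y 0" by auto
next
  fix m assume "m \<le> k" "\<forall>i<m. x i = y i" "x m < y m"
  then show "x 0 \<le> y 0" by (cases m) auto
qed

lemma lex_le_cong: "(\<And>i. i \<le> k \<Longrightarrow> x i = x' i) \<Longrightarrow> (\<And>i. i \<le> k \<Longrightarrow> y i = y' i) \<Longrightarrow>
   lex_le x y k = lex_le x' y' k"
proof -
  assume h1: "\<And>i. i \<le> k \<Longrightarrow> x i = x' i" and h2: "\<And>i. i \<le> k \<Longrightarrow> y i = y' i"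
  have "(\<forall>i\<le>k. x i = y i) = (\<forall>i\<le>k. x' i = y' i)" using h1 h2 by auto
  moreover have "\<And>m. m \<le> k \<Longrightarrow> ((\<forall>i<m. x i = y i) \<and> x m < y m) = ((\<forall>i<m. x' i = y' i) \<and> x' m < y' m)"
    using h1 h2 by auto
  ultimately show ?thesis unfolding lex_le_def by blast
qed

lemma lex_le_Suc: "lex_le x y (Suc k) \<Longrightarrow> x 0 = y 0 \<Longrightarrow> lex_le (\<lambda>i. x (Suc i)) (\<lambda>i. y (Suc i)) k"
  unfolding lex_le_def
proof (elim disjE exE conjE)
  assume "\<forall>i\<le>Suc k. x i = y i" then show "(\<forall>i\<le>k. x (Suc i) = y (Suc i)) \<or>
    (\<exists>m\<le>k. (\<forall>i<m. x (Suc i) = y (Suc i)) \<and> x (Suc m) < y (Suc m))" by auto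
next
  fix m assume m: "m \<le> Suc k" "\<forall>i<m. x i = y i" "x m < y m" "x 0 = y 0"
  then obtain m' where "m = Suc m'" by (cases m) auto
  then show "(\<forall>i\<le>k. x (Suc i) = y (Suc i)) \<or>
    (\<exists>m\<le>k. (\<forall>i<m. x (Suc i) = y (Suc i)) \<and> x (Suc m) < y (Suc m))"
    using m by (intro disjI2 exI[of _ m']) auto
qed

lemma lex_not: "\<not> lex_le x y k \<Longrightarrow> \<exists>m\<le>k. (\<forall>i<m. x i = y i) \<and> x m > y m"
proof -
  assume nl: "\<not> lex_le x y k"
  then have ex: "\<exists>i. i \<le> k \<and> x i \<noteq> y i" unfolding lex_le_def by auto
  define m where "m = (LEAST i. i \<le> k \<and> x i \<noteq> y i)"
  have m1: "m \<le> k \<and> x m \<noteq> y m" unfolding m_def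
    by (rule LeastI_ex) (use ex in blast)
  have m2: "\<forall>i<m. x i = y i"
  proof (intro allI impI)
    fix i assume "i < m"
    then have "\<not> (i \<le> k \<and> x i \<noteq> y i)" unfolding m_def using not_less_Least by blast
    then show "x i = y i" using \<open>i < m\<close> m1 by auto
  qed
  have "\<not> x m < y m" using nl m1 m2 unfolding lex_le_def by auto
  then show ?thesis using m1 m2 by (intro exI[of _ m]) auto
qed


context
  fixes a b :: int
  assumes ab1: "- a + 1 \<le> b" and ab2: "b \<le> -2"
begin

lemma key_le:
  assumes adm: "\<And>p. lex_le (\<lambda>i. d (p - i)) (cmpword a b) p"
    and nn: "\<And>j. d j \<ge> 0"
  shows "\<forall>s. (n > 0 \<longrightarrow> lex_le (\<lambda>i. d (n - 1 - i)) (\<lambda>i. cmpword a b (s + i)) (n - 1))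
     \<longrightarrow> Vd a b d n \<le> Wf a b s n"
proof (induction n rule: nat_less_induct)
  case (1 n)
  show ?case
  proof (cases n)
    case 0 then show ?thesis by (simp add: Vd_def)
  next
    case (Suc m)
    show ?thesis
    proof (intro allI impI)
      fix s assume h: "n > 0 \<longrightarrow> lex_le (\<lambda>i. d (n - 1 - i)) (\<lambda>i. cmpword a b (s + i)) (n - 1)"
      then have L: "lex_le (\<lambda>i. d (m - i)) (\<lambda>i. cmpword a b (s + i)) m" using Suc by simp
      have d0: "d m \<le> cmpword a b s" using lex_le_0[OF L] by simp
      have Vm: "Vd a b d m \<le> Tseq a b m - 1"
      proof -
        have "Vd a b d m \<le> Wf a b 0 m"
        proof (cases m)
          case 0 then show ?thesis by (simp add: Vd_def)
        next
          case (Suc m')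
          have "lex_le (\<lambda>i. d (m - 1 - i)) (\<lambda>i. cmpword a b (0 + i)) (m - 1)"
            using adm[of "m - 1"] by simp
          then show ?thesis using 1 \<open>n = Suc m\<close> Suc by auto
        qed
        then show ?thesis using W0[OF ab1 ab2] by simp
      qed
      show "Vd a b d n \<le> Wf a b s n"
      proof (cases "d m < cmpword a b s")
        case True
        have "d m * Tseq a b m \<le> (cmpword a b s - 1) * Tseq a b m"
          using True T_ge1[OF ab1 ab2, of m] by (intro mult_right_mono) auto
        then show ?thesis using Vm Suc W_nonneg[OF ab1 ab2, of "Suc s" m] by (simp add: Vd_Suc algebra_simps)
      next
        case False
        then have eq: "d m = cmpword a b s" using d0 by simp
        have "Vd a b d m \<le> Wf a b (Suc s) m"
        proof (cases m)
          case 0 then show ?thesis by (simp add: Vd_def)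
        next
          case (Suc m')
          have "lex_le (\<lambda>i. d (m - Suc i)) (\<lambda>i. cmpword a b (s + Suc i)) m'"
            using lex_le_Suc[OF L[unfolded Suc]] eq Suc by simp
          then have "lex_le (\<lambda>i. d (m - 1 - i)) (\<lambda>i. cmpword a b (Suc s + i)) (m - 1)"
            using Suc by simp
          then show ?thesis using 1 \<open>n = Suc m\<close> Suc by auto
        qed
        then show ?thesis using eq Suc by (simp add: Vd_Suc)
      qed
    qed
  qed
qed

lemma key_lt:
  assumes "admissible a b 0 d"
  shows "Vd a b d n < Tseq a b n"
proof -
  have adm: "\<And>p. lex_le (\<lambda>i. d (p - i)) (cmpword a b) p" and nn: "\<And>j. d j \<ge> 0"
    using assms unfolding admissible_def by auto
  have "Vd a b d n \<le> Wf a b 0 n"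
  proof (cases n)
    case 0 then show ?thesis by (simp add: Vd_def)
  next
    case (Suc m)
    have "lex_le (\<lambda>i. d (n - 1 - i)) (\<lambda>i. cmpword a b (0 + i)) (n - 1)" using adm[of "n-1"] by simp
    then show ?thesis using key_le[OF adm nn, of n] Suc by auto
  qed
  then show ?thesis using W0[OF ab1 ab2] by simp
qed

lemma key_gt:
  assumes nn: "\<And>j. d j \<ge> 0"
  shows "\<forall>s m. m < n \<and> (\<forall>i<m. d (n - 1 - i) = cmpword a b (s + i)) \<and> d (n - 1 - m) > cmpword a b (s + m)
     \<longrightarrow> Vd a b d n \<ge> Wf a b s n + 1"
proof (induction n)
  case 0 then show ?case by simp
next
  case (Suc n)
  show ?case
  proof (intro allI impI)
    fix s m assume h: "m < Suc n \<and> (\<forall>i<m. d (Suc n - 1 - i) = cmpword a b (s + i)) \<and>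
        cmpword a b (s + m) < d (Suc n - 1 - m)"
    have Vn: "Vd a b d n \<ge> 0" unfolding Vd_def
      using nn T_ge1[OF ab1 ab2] by (intro sum_nonneg) (meson order_trans zero_le_one zero_le_mult_iff)
    show "Wf a b s (Suc n) + 1 \<le> Vd a b d (Suc n)"
    proof (cases m)
      case 0
      then have "d n \<ge> cmpword a b s + 1" using h by simp
      then have "d n * Tseq a b n \<ge> (cmpword a b s + 1) * Tseq a b n"
        using T_ge1[OF ab1 ab2, of n] by (intro mult_right_mono) auto
      moreover have "Wf a b (Suc s) n \<le> Tseq a b n - 1" using W_Suc_le[OF ab1 ab2, of s n] W0[OF ab1 ab2, of n] by simp
      ultimately show ?thesis using Vn by (simp add: Vd_Suc algebra_simps)
    next
      case (Suc m')
      have "d (Suc n - 1 - 0) = cmpword a b (s + 0)" using h Suc by blast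
      then have "d n = cmpword a b s" by simp
      moreover have "Vd a b d n \<ge> Wf a b (Suc s) n + 1"
      proof -
        have "m' < n" using h Suc by simp
        moreover have "\<forall>i<m'. d (n - 1 - i) = cmpword a b (Suc s + i)"
        proof (intro allI impI)
          fix i assume "i < m'"
          then have "d (Suc n - 1 - Suc i) = cmpword a b (s + Suc i)" using h Suc by blast
          then show "d (n - 1 - i) = cmpword a b (Suc s + i)" by simp
        qed
        moreover have "d (n - 1 - m') > cmpword a b (Suc s + m')" using h Suc by simp
        ultimately show ?thesis using Suc.IH by blast
      qed
      ultimately show ?thesis by (simp add: Vd_Suc)
    qed
  qed
qed



lemma Vd_nonneg: "(\<And>j. d j \<ge> 0) \<Longrightarrow> Vd a b d n \<ge> 0"
  unfolding Vd_def using T_ge1[OF ab1 ab2]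
  by (intro sum_nonneg) (meson order_trans zero_le_one zero_le_mult_iff)

lemma Vd_const:
  assumes "\<And>j. j \<ge> n \<Longrightarrow> d j = 0" and "n \<le> m" shows "Vd a b d m = Vd a b d n"
  using assms(2) by (induction m rule: dec_induct) (auto simp: Vd_Suc assms(1))

lemma Vd_cong: "(\<And>j. j < n \<Longrightarrow> d j = d' j) \<Longrightarrow> Vd a b d n = Vd a b d' n"
  unfolding Vd_def by (intro sum.cong) auto

lemma uniq_V:
  assumes "admissible a b 0 d" "admissible a b 0 d'"
  shows "Vd a b d n = Vd a b d' n \<Longrightarrow> \<forall>j<n. d j = d' j"
proof (induction n)
  case 0 then show ?case by simp
next
  case (Suc n)
  have nn: "\<And>j. d j \<ge> 0" "\<And>j. d' j \<ge> 0" using assms unfolding admissible_def by auto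
  have k1: "Vd a b d n \<le> Tseq a b n - 1" "Vd a b d' n \<le> Tseq a b n - 1"
    using key_lt[OF assms(1), of n] key_lt[OF assms(2), of n] by auto
  have v0: "Vd a b d n \<ge> 0" "Vd a b d' n \<ge> 0" using Vd_nonneg nn by auto
  have eq: "d n * Tseq a b n + Vd a b d n = d' n * Tseq a b n + Vd a b d' n"
    using Suc.prems by (simp add: Vd_Suc)
  have "d n = d' n"
  proof (rule ccontr)
    assume "d n \<noteq> d' n"
    then consider "d n + 1 \<le> d' n" | "d' n + 1 \<le> d n" by linarith
    then show False
    proof cases
      case 1
      then have "(d n + 1) * Tseq a b n \<le> d' n * Tseq a b n"
        using T_ge1[OF ab1 ab2, of n] by (intro mult_right_mono) auto
      then show False using eq k1 v0 by (simp add: algebra_simps)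
    next
      case 2
      then have "(d' n + 1) * Tseq a b n \<le> d n * Tseq a b n"
        using T_ge1[OF ab1 ab2, of n] by (intro mult_right_mono) auto
      then show False using eq k1 v0 by (simp add: algebra_simps)
    qed
  qed
  then have "Vd a b d n = Vd a b d' n" using eq by simp
  then show ?case using Suc.IH \<open>d n = d' n\<close> less_Suc_eq by auto
qed

lemma Trep_V: "Trep a b N d \<Longrightarrow> \<exists>n. (\<forall>j\<ge>n. d j = 0) \<and> Vd a b d n = int N"
proof -
  assume "Trep a b N d"
  then obtain n where n: "\<forall>j>n. d j = 0" "int N = (\<Sum>j\<le>n. d j * Tseq a b j)"
    unfolding Trep_def by auto
  have "Vd a b d (Suc n) = int N" using n(2) unfolding Vd_def by (simp add: lessThan_Suc_atMost)
  then show ?thesis using n(1) by (intro exI[of _ "Suc n"]) auto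
qed

lemma Trep_unique: "Trep a b N d \<Longrightarrow> Trep a b N d' \<Longrightarrow> d = d'"
proof -
  assume h: "Trep a b N d" "Trep a b N d'"
  obtain n1 where n1: "\<forall>j\<ge>n1. d j = 0" "Vd a b d n1 = int N" using Trep_V[OF h(1)] by auto
  obtain n2 where n2: "\<forall>j\<ge>n2. d' j = 0" "Vd a b d' n2 = int N" using Trep_V[OF h(2)] by auto
  define n where "n = max n1 n2"
  have "Vd a b d n = int N" using Vd_const[of n1 d n] n1 unfolding n_def by auto
  moreover have "Vd a b d' n = int N" using Vd_const[of n2 d' n] n2 unfolding n_def by auto
  moreover have ad: "admissible a b 0 d" "admissible a b 0 d'" using h unfolding Trep_def by auto
  ultimately have "\<forall>j<n. d j = d' j" using uniq_V[OF ad, of n] by simp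
  moreover have "\<forall>j\<ge>n. d j = 0 \<and> d' j = 0" using n1(1) n2(1) unfolding n_def by auto
  ultimately show "d = d'" by (metis not_le ext)
qed

lemma adm_of_partial:
  assumes nn: "\<And>j. d j \<ge> 0" and ps: "\<And>j. Vd a b d (Suc j) < Tseq a b (Suc j)"
  shows "admissible a b 0 d"
proof -
  have lex: "lex_le (\<lambda>i. d (j - i)) (cmpword a b) k" if "k \<le> j" for j k
  proof (rule ccontr)
    assume "\<not> lex_le (\<lambda>i. d (j - i)) (cmpword a b) k"
    from lex_not[OF this] obtain m where m: "m \<le> k" "\<forall>i<m. d (j - i) = cmpword a b i"
      "d (j - m) > cmpword a b m" by auto
    have "m < Suc j \<and> (\<forall>i<m. d (Suc j - 1 - i) = cmpword a b (0 + i)) \<and> d (Suc j - 1 - m) > cmpword a b (0 + m)"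
      using m that by auto
    then have "Vd a b d (Suc j) \<ge> Wf a b 0 (Suc j) + 1" using key_gt[where d=d and n="Suc j", OF nn] by blast
    then show False using ps[of j] W0[OF ab1 ab2, of "Suc j"] by simp
  qed
  have "d j \<le> a - 1" for j
    using lex_le_0[OF lex[of 0 j]] by (simp add: cmpword_def)
  then show ?thesis unfolding admissible_def using lex nn by auto
qed

lemma exist_n: "\<forall>M. 0 \<le> M \<and> M < Tseq a b n \<longrightarrow> (\<exists>d. (\<forall>j\<ge>n. d j = 0) \<and> (\<forall>j. 0 \<le> d j) \<and>
   (\<forall>j. Vd a b d (Suc j) < Tseq a b (Suc j)) \<and> Vd a b d n = M)"
proof (induction n)
  case 0
  show ?case
  proof (intro allI impI)
    fix M :: int assume "0 \<le> M \<and> M < Tseq a b 0"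
    then have "M = 0" by simp
    then show "\<exists>d. (\<forall>j\<ge>0. d j = 0) \<and> (\<forall>j. 0 \<le> d j) \<and>
      (\<forall>j. Vd a b d (Suc j) < Tseq a b (Suc j)) \<and> Vd a b d 0 = M"
      using T_ge1[OF ab1 ab2] by (intro exI[of _ "\<lambda>_. 0"]) (auto simp: Vd_def intro: order.strict_trans2[OF zero_less_one])
  qed
next
  case (Suc n)
  show ?case
  proof (intro allI impI)
    fix M :: int assume M: "0 \<le> M \<and> M < Tseq a b (Suc n)"
    have Tp: "Tseq a b n > 0" using T_ge1[OF ab1 ab2, of n] by simp
    define q where "q = M div Tseq a b n"
    define r where "r = M mod Tseq a b n"
    have r: "0 \<le> r \<and> r < Tseq a b n" unfolding r_def using Tp by simp
    have q: "q \<ge> 0" unfolding q_def using M Tp by (simp add: div_int_pos_iff)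
    have Mqr: "M = q * Tseq a b n + r" unfolding q_def r_def by simp
    obtain d where d: "\<forall>j\<ge>n. d j = 0" "\<forall>j. 0 \<le> d j" "\<forall>j. Vd a b d (Suc j) < Tseq a b (Suc j)"
      "Vd a b d n = r" using Suc.IH r by blast
    define d' where "d' = d(n := q)"
    have V1: "Vd a b d' n = r" using d(4) Vd_cong[of n d' d] unfolding d'_def by auto
    have V2: "Vd a b d' (Suc n) = M" using V1 Mqr by (simp add: Vd_Suc d'_def)
    have z: "\<forall>j\<ge>Suc n. d' j = 0" using d(1) unfolding d'_def by auto
    have ps: "Vd a b d' (Suc j) < Tseq a b (Suc j)" for j
    proof (cases "j < n")
      case True
      have "Vd a b d' (Suc j) = Vd a b d (Suc j)" using True by (intro Vd_cong) (auto simp: d'_def)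
      then show ?thesis using d(3) by simp
    next
      case False
      have "Vd a b d' (Suc j) = Vd a b d' (Suc n)" using False z by (intro Vd_const) auto
      moreover have "Tseq a b (Suc n) \<le> Tseq a b (Suc j)" using False T_mono[OF ab1 ab2] by simp
      ultimately show ?thesis using V2 M by simp
    qed
    show "\<exists>d. (\<forall>j\<ge>Suc n. d j = 0) \<and> (\<forall>j. 0 \<le> d j) \<and>
      (\<forall>j. Vd a b d (Suc j) < Tseq a b (Suc j)) \<and> Vd a b d (Suc n) = M"
      using z ps V2 d(2) q by (intro exI[of _ d']) (auto simp: d'_def)
  qed
qed

lemma Trep_exists: "\<exists>d. Trep a b N d"
proof -
  have "int N < Tseq a b N" using T_gt[OF ab1 ab2] by simp
  then obtain d where d: "\<forall>j\<ge>N. d j = 0" "\<forall>j. 0 \<le> d j"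
      "\<forall>j. Vd a b d (Suc j) < Tseq a b (Suc j)" "Vd a b d N = int N"
    using exist_n[of N, rule_format, of "int N"] by auto
  have ad: "admissible a b 0 d" using adm_of_partial d(2,3) by auto
  have "Vd a b d (Suc N) = int N" using d(1,4) by (simp add: Vd_Suc)
  then have "int N = (\<Sum>j\<le>N. d j * Tseq a b j)" unfolding Vd_def by (simp add: lessThan_Suc_atMost)
  then show ?thesis unfolding Trep_def using ad d(1) by (intro exI[of _ d] conjI exI[of _ N]) auto
qed

lemma Tdigits_Trep: "Trep a b N (Tdigits a b N)"
  unfolding Tdigits_def using Trep_exists Trep_unique by (metis theI)

lemma Tdigits_eq: "Trep a b N d \<Longrightarrow> Tdigits a b N = d"
  using Tdigits_Trep Trep_unique by blast


end



definition fm :: "int \<Rightarrow> complex \<Rightarrow> real \<times> real \<Rightarrow> complex" where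
  "fm b \<alpha> z = - (complex_of_real (fst z) * (1 + of_int b * \<alpha>)) - complex_of_real (snd z) * \<alpha>"

lemma fm_linear: "linear (fm b \<alpha>)"
  by (rule linearI) (auto simp: fm_def scaleR_conv_of_real algebra_simps)

lemma fm_Re: "Re (fm b \<alpha> (x, y)) = - x - (of_int b * x + y) * Re \<alpha>"
  by (simp add: fm_def algebra_simps)
lemma fm_Im: "Im (fm b \<alpha> (x, y)) = - (of_int b * x + y) * Im \<alpha>"
  by (simp add: fm_def algebra_simps)

lemma fm_bij: assumes "Im \<alpha> \<noteq> 0" shows "bij (fm b \<alpha>)"
proof (rule bijI)
  show "inj (fm b \<alpha>)"
  proof (rule injI)
    fix u v assume h: "fm b \<alpha> u = fm b \<alpha> v"
    obtain x1 y1 x2 y2 where uv: "u = (x1, y1)" "v = (x2, y2)" by (cases u, cases v) auto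
    have "Im (fm b \<alpha> u) = Im (fm b \<alpha> v)" using h by simp
    then have e1: "of_int b * x1 + y1 = of_int b * x2 + y2" using assms uv by (simp add: fm_Im)
    have "Re (fm b \<alpha> u) = Re (fm b \<alpha> v)" using h by simp
    then have "x1 = x2" using e1 uv by (simp add: fm_Re)
    then show "u = v" using e1 uv by simp
  qed
  show "surj (fm b \<alpha>)"
  proof (rule surjI)
    fix z :: complex
    define s where "s = - Im z / Im \<alpha>"
    define x where "x = - (Re z + s * Re \<alpha>)"
    define y where "y = s - of_int b * x"
    have "fm b \<alpha> (x, y) = z"
    proof (rule complex_eqI)
      show "Re (fm b \<alpha> (x, y)) = Re z" by (simp add: fm_Re y_def x_def)
      show "Im (fm b \<alpha> (x, y)) = Im z" using assms by (simp add: fm_Im y_def s_def)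
    qed
    then show "fm b \<alpha> (x, y) = z" .
  qed
qed

lemma fm_lattice: "fm b \<alpha> ` {(real_of_int m, real_of_int n) | m n. True} = {of_int m + of_int n * \<alpha> | m n. True}"
proof (intro equalityI subsetI)
  fix z assume "z \<in> fm b \<alpha> ` {(real_of_int m, real_of_int n) | m n. True}"
  then obtain m n where z: "z = fm b \<alpha> (real_of_int m, real_of_int n)" by auto
  have "z = of_int (-m) + of_int (- (b * m + n)) * \<alpha>" unfolding z fm_def by (simp add: algebra_simps)
  then show "z \<in> {of_int m + of_int n * \<alpha> | m n. True}" by blast
next
  fix z assume "z \<in> {of_int m + of_int n * \<alpha> | m n. True}"
  then obtain m n where z: "z = of_int m + of_int n * \<alpha>" by auto
  have "z = fm b \<alpha> (real_of_int (-m), real_of_int (- n + b * m))" unfolding z fm_def by (simp add: algebra_simps)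
  then show "z \<in> fm b \<alpha> ` {(real_of_int m, real_of_int n) | m n. True}" by blast
qed

lemma key_rel_gen: "(x::complex)^3 - A*x^2 - BB*x - 1 = 0 \<Longrightarrow> y^3 - A*y^2 - BB*y - 1 = 0 \<Longrightarrow> x \<noteq> y \<Longrightarrow>
   y^2*x^2 + BB*y*x + y + x = 0"
  by algebra

lemma prod_roots: "(x::complex)^3 - A*x^2 - BB*x - 1 = 0 \<Longrightarrow> y^3 - A*y^2 - BB*y - 1 = 0 \<Longrightarrow> w^3 - A*w^2 - BB*w - 1 = 0 \<Longrightarrow> x \<noteq> y \<Longrightarrow>
   w \<noteq> x \<Longrightarrow> w \<noteq> y \<Longrightarrow> x * y * w = 1"
  by algebra

definition Tm1 :: "int \<Rightarrow> int \<Rightarrow> nat \<Rightarrow> int" where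
  "Tm1 a b j = (if j = 0 then 0 else Tseq a b (j - 1))"
definition Tm2 :: "int \<Rightarrow> int \<Rightarrow> nat \<Rightarrow> int" where
  "Tm2 a b j = (if j < 2 then 0 else Tseq a b (j - 2))"

lemma Tm1_rec: "Tm1 a b (Suc (Suc (Suc j))) = a * Tm1 a b (Suc (Suc j)) + b * Tm1 a b (Suc j) + Tm1 a b j"
  by (cases j) (auto simp: Tm1_def power2_eq_square)

lemma Tm2_rec: "Tm2 a b (Suc (Suc (Suc j))) = a * Tm2 a b (Suc (Suc j)) + b * Tm2 a b (Suc j) + Tm2 a b j"
proof (cases j)
  case 0 then show ?thesis by (simp add: Tm2_def)
next
  case (Suc i) then show ?thesis by (cases i) (auto simp: Tm2_def power2_eq_square)
qed

definition Uf :: "int \<Rightarrow> int \<Rightarrow> real \<Rightarrow> complex \<Rightarrow> nat \<Rightarrow> complex" where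
  "Uf a b \<beta> \<alpha> j = - (1 + of_int b * \<alpha>) * (of_int (Tseq a b j) / of_real \<beta> - of_int (Tm1 a b j))
       - \<alpha> * (of_int (Tseq a b j) / (of_real \<beta>)^2 - of_int (Tm2 a b j))"

lemma Uf_rec: "Uf a b \<beta> \<alpha> (Suc (Suc (Suc j))) =
   of_int a * Uf a b \<beta> \<alpha> (Suc (Suc j)) + of_int b * Uf a b \<beta> \<alpha> (Suc j) + Uf a b \<beta> \<alpha> j"
  unfolding Uf_def Tm1_rec Tm2_rec Tseq.simps(4)
  by (simp add: algebra_simps add_divide_distrib diff_divide_distrib)

lemma Uf_alpha:
  assumes cb: "\<beta> ^ 3 - of_int a * \<beta> ^ 2 - of_int b * \<beta> - 1 = 0"
    and ca: "\<alpha> ^ 3 - of_int a * \<alpha> ^ 2 - of_int b * \<alpha> - 1 = 0"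
    and im: "Im \<alpha> \<noteq> 0"
  shows "Uf a b \<beta> \<alpha> j = \<alpha> ^ (j + 2)"
proof -
  define B where "B = complex_of_real \<beta>"
  have cB: "B ^ 3 - of_int a * B ^ 2 - of_int b * B - 1 = 0"
    unfolding B_def using arg_cong[OF cb, of complex_of_real] by simp
  have "\<alpha> \<noteq> B" using im unfolding B_def by auto
  then have KR: "B^2*\<alpha>^2 + of_int b*B*\<alpha> + B + \<alpha> = 0" using key_rel_gen[OF ca cB] by simp
  have B0: "B \<noteq> 0" using cB by auto
  have u0: "Uf a b \<beta> \<alpha> 0 = \<alpha>^2"
  proof -
    have "Uf a b \<beta> \<alpha> 0 = (- (1 + of_int b * \<alpha>) * B - \<alpha>) / B^2"
      unfolding Uf_def B_def[symmetric] using B0 by (simp add: Tm1_def Tm2_def field_simps power2_eq_square)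
    also have "\<dots> = \<alpha>^2"
    proof -
      have "- (1 + of_int b * \<alpha>) * B - \<alpha> = \<alpha>^2 * B^2" using KR by (simp add: algebra_simps power2_eq_square) (metis add_eq_0_iff2 add.commute add.left_commute)
      then show ?thesis using B0 by simp
    qed
    finally show ?thesis .
  qed
  have a3: "\<alpha>^3 = of_int a * \<alpha>^2 + of_int b * \<alpha> + 1" using ca by (simp add: algebra_simps)
  have u1: "Uf a b \<beta> \<alpha> 1 = \<alpha>^3"
  proof -
    have "Uf a b \<beta> \<alpha> 1 = of_int a * Uf a b \<beta> \<alpha> 0 + (1 + of_int b * \<alpha>)"
      unfolding Uf_def by (simp add: Tm1_def Tm2_def algebra_simps diff_divide_distrib)
    then show ?thesis using u0 a3 by simp
  qed
  have u2: "Uf a b \<beta> \<alpha> 2 = \<alpha>^4"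
  proof -
    have "Uf a b \<beta> \<alpha> 2 = (of_int a ^ 2 + of_int b) * Uf a b \<beta> \<alpha> 0 + of_int a * (1 + of_int b * \<alpha>) + \<alpha>"
      unfolding Uf_def B_def[symmetric] using B0 by (simp add: Tm1_def Tm2_def field_simps numeral_2_eq_2 power2_eq_square)
    then show ?thesis using u0 a3 by (simp add: algebra_simps power2_eq_square power3_eq_cube) algebra
  qed
  have "\<forall>j. Uf a b \<beta> \<alpha> j = \<alpha> ^ (j + 2) \<and> Uf a b \<beta> \<alpha> (Suc j) = \<alpha> ^ (j + 3) \<and>
      Uf a b \<beta> \<alpha> (Suc (Suc j)) = \<alpha> ^ (j + 4)"
  proof
    fix j show "Uf a b \<beta> \<alpha> j = \<alpha> ^ (j + 2) \<and> Uf a b \<beta> \<alpha> (Suc j) = \<alpha> ^ (j + 3) \<and>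
      Uf a b \<beta> \<alpha> (Suc (Suc j)) = \<alpha> ^ (j + 4)"
    proof (induction j)
      case 0 then show ?case using u0 u1 u2 by (simp add: numeral_2_eq_2)
    next
      case (Suc j)
      have "\<alpha> ^ (j + 5) = of_int a * \<alpha> ^ (j + 4) + of_int b * \<alpha> ^ (j + 3) + \<alpha> ^ (j + 2)"
      proof -
        have "\<alpha> ^ (j + 5) = \<alpha>^(j+2) * \<alpha>^3" using power_add[of \<alpha> "j+2" 3] by (simp add: add.commute)
        also have "\<dots> = \<alpha>^(j+2) * (of_int a * \<alpha>^2 + of_int b * \<alpha> + 1)" using a3 by simp
        also have "\<dots> = of_int a * \<alpha> ^ (j + 4) + of_int b * \<alpha> ^ (j + 3) + \<alpha> ^ (j + 2)"
          by (simp add: algebra_simps power_add[symmetric] numeral_eq_Suc)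
        finally show ?thesis .
      qed
      then show ?case using Suc Uf_rec[of a b \<beta> \<alpha> j] by (simp add: numeral_eq_Suc)
    qed
  qed
  then show ?thesis by blast
qed


lemma sum_lin:
  fixes c x y z :: "nat \<Rightarrow> complex"
  shows "(\<Sum>j\<in>A. c j * (P * (x j / B - y j) + Q * (x j / B2 - z j))) =
    P * ((\<Sum>j\<in>A. c j * x j) / B - (\<Sum>j\<in>A. c j * y j)) + Q * ((\<Sum>j\<in>A. c j * x j) / B2 - (\<Sum>j\<in>A. c j * z j))"
  by (induction A rule: infinite_finite_induct) (simp_all add: algebra_simps add_divide_distrib)

context
  fixes a b :: int and \<beta> :: real and \<alpha> :: complex
  assumes ab1: "- a + 1 \<le> b" and ab2: "b \<le> -2"
    and cb: "\<beta> ^ 3 - of_int a * \<beta> ^ 2 - of_int b * \<beta> - 1 = 0"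
    and ca: "\<alpha> ^ 3 - of_int a * \<alpha> ^ 2 - of_int b * \<alpha> - 1 = 0"
    and im: "Im \<alpha> \<noteq> 0"
    and nrm: "cmod \<alpha> < \<bar>\<beta>\<bar>"
begin

lemma delta_image:
  "\<exists>n. (\<forall>j\<ge>n. Tdigits a b N j = 0) \<and>
     fm b \<alpha> (delta a b \<beta> N) = (\<Sum>j<n. of_int (Tdigits a b N j) * \<alpha> ^ (j + 2))"
proof -
  define d where "d = Tdigits a b N"
  have tr: "Trep a b N d" unfolding d_def by (rule Tdigits_Trep[OF ab1 ab2])
  obtain n where n: "\<forall>j\<ge>n. d j = 0" "Vd a b d n = int N" using Trep_V[OF ab1 ab2 tr] by auto
  have sub: "{j. k \<le> j \<and> d j \<noteq> 0} \<subseteq> {..<n}" for k using n(1) by (auto simp: not_less[symmetric])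
  have S1: "(\<Sum>j\<in>{j. 1 \<le> j \<and> d j \<noteq> 0}. d j * Tseq a b (j - 1)) = (\<Sum>j<n. d j * Tm1 a b j)"
    by (rule sum.mono_neutral_cong_left) (use sub in \<open>auto simp: Tm1_def\<close>)
  have S2: "(\<Sum>j\<in>{j. 2 \<le> j \<and> d j \<noteq> 0}. d j * Tseq a b (j - 2)) = (\<Sum>j<n. d j * Tm2 a b j)"
    by (rule sum.mono_neutral_cong_left) (use sub in \<open>auto simp: Tm2_def\<close>)
  have NN: "(of_nat N :: complex) = (\<Sum>j<n. of_int (d j) * of_int (Tseq a b j))"
  proof -
    have "(of_nat N :: complex) = of_int (int N)" by simp
    also have "\<dots> = of_int (Vd a b d n)" using n(2) by simp
    finally show ?thesis unfolding Vd_def by simp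
  qed
  have "(\<Sum>j<n. of_int (d j) * \<alpha> ^ (j + 2)) = (\<Sum>j<n. of_int (d j) * Uf a b \<beta> \<alpha> j)"
    using Uf_alpha[OF cb ca im] by simp
  also have "\<dots> = - (1 + of_int b * \<alpha>) * ((\<Sum>j<n. of_int (d j) * of_int (Tseq a b j)) / of_real \<beta>
        - (\<Sum>j<n. of_int (d j) * of_int (Tm1 a b j)))
      - \<alpha> * ((\<Sum>j<n. of_int (d j) * of_int (Tseq a b j)) / (of_real \<beta>)^2
        - (\<Sum>j<n. of_int (d j) * of_int (Tm2 a b j)))"
    unfolding Uf_def using sum_lin[of "\<lambda>j. of_int (d j)" "- (1 + of_int b * \<alpha>)" "\<lambda>j. of_int (Tseq a b j)"
      "of_real \<beta>" "\<lambda>j. of_int (Tm1 a b j)" "- \<alpha>" "(of_real \<beta>)^2" "\<lambda>j. of_int (Tm2 a b j)" "{..<n}"]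
    by (simp add: algebra_simps)
  also have "\<dots> = fm b \<alpha> (delta a b \<beta> N)"
    unfolding fm_def delta_def d_def[symmetric] Let_def S1 S2 by (simp add: NN algebra_simps) (simp add: add_divide_distrib[symmetric])
  finally show ?thesis using n(1) unfolding d_def by auto
qed

lemma in_Rauzy:
  assumes ad: "admissible a b 0 d" and z: "\<forall>j\<ge>n. d j = 0"
  shows "(\<Sum>j<n. of_int (d j) * \<alpha> ^ (j + 2)) \<in> Rauzy a b \<alpha>"
proof -
  define e where "e = (\<lambda>i. if i < 2 then 0 else d (i - 2))"
  have ade: "admissible a b 2 e"
    unfolding admissible_def
  proof (intro conjI allI impI)
    fix j :: nat assume "2 \<le> j"
    then show "0 \<le> e j" "e j \<le> a - 1" using ad unfolding admissible_def e_def by auto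
  next
    fix j k :: nat assume jk: "2 + k \<le> j"
    have adl: "\<forall>j k. 0 + k \<le> j \<longrightarrow> lex_le (\<lambda>i. d (j - i)) (cmpword a b) k"
      using ad unfolding admissible_def by blast
    have "0 + k \<le> j - 2" using jk by simp
    from adl[rule_format, OF this] have "lex_le (\<lambda>i. d (j - 2 - i)) (cmpword a b) k" .
    moreover have "\<And>i. i \<le> k \<Longrightarrow> d (j - 2 - i) = e (j - i)" using jk unfolding e_def by auto
    ultimately show "lex_le (\<lambda>i. e (j - i)) (cmpword a b) k" using lex_le_cong by (metis (no_types, lifting))
  qed
  have "(\<Sum>i. of_int (e (i + 2)) * \<alpha> ^ (i + 2)) = (\<Sum>i<n. of_int (e (i + 2)) * \<alpha> ^ (i + 2))"
    by (rule suminf_finite) (use z in \<open>auto simp: e_def\<close>)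
  also have "\<dots> = (\<Sum>j<n. of_int (d j) * \<alpha> ^ (j + 2))" by (simp add: e_def)
  finally have cal: "(\<Sum>i. of_int (e (i + 2)) * \<alpha> ^ (i + 2)) = (\<Sum>j<n. of_int (d j) * \<alpha> ^ (j + 2))" .
  show ?thesis unfolding Rauzy_def mem_Collect_eq by (rule exI[of _ e]) (use ade cal in auto)
qed


lemma alpha_lt1: "cmod \<alpha> < 1"
proof -
  define B where "B = complex_of_real \<beta>"
  have cB: "B ^ 3 - of_int a * B ^ 2 - of_int b * B - 1 = 0"
    unfolding B_def using arg_cong[OF cb, of complex_of_real] by simp
  have cc: "(cnj \<alpha>) ^ 3 - of_int a * (cnj \<alpha>) ^ 2 - of_int b * (cnj \<alpha>) - 1 = 0"
    using arg_cong[OF ca, of cnj] by simp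
  have n1: "\<alpha> \<noteq> B" "cnj \<alpha> \<noteq> \<alpha>" "cnj \<alpha> \<noteq> B" using im unfolding B_def
    by (auto simp: complex_eq_iff)
  have "\<alpha> * B * cnj \<alpha> = 1" using prod_roots[OF ca cB cc n1] .
  then have "(\<alpha> * cnj \<alpha>) * B = 1" by (simp add: algebra_simps)
  then have "complex_of_real ((cmod \<alpha>)^2 * \<beta>) = 1" unfolding B_def
    by (simp add: complex_norm_square[symmetric])
  then have e: "(cmod \<alpha>)^2 * \<beta> = 1" using of_real_eq_1_iff by blast
  have bp: "\<beta> > 0"
  proof (rule ccontr)
    assume "\<not> \<beta> > 0"
    then have "(cmod \<alpha>)^2 * \<beta> \<le> 0" by (intro mult_nonneg_nonpos) auto
    then show False using e by simp
  qed
  have ap: "cmod \<alpha> > 0" using e by (metis mult_eq_0_iff norm_eq_zero power_zero_numeral zero_less_norm_iff zero_neq_one)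
  have "(cmod \<alpha>)^2 * cmod \<alpha> < (cmod \<alpha>)^2 * \<beta>"
    using nrm bp ap by (intro mult_strict_left_mono) auto
  then have "(cmod \<alpha>)^3 < 1 ^ 3" using e by (simp add: power2_eq_square power3_eq_cube)
  then show ?thesis by (rule power_less_imp_less_base) simp
qed



definition Rs :: "complex \<Rightarrow> (nat \<Rightarrow> int) \<Rightarrow> complex" where
  "Rs al u = (\<Sum>i. of_int (u (i + 2)) * al ^ (i + 2))"

lemma term_bound:
  assumes "\<bar>c\<bar> \<le> a - 1"
  shows "norm (of_int c * \<alpha> ^ (i + 2)) \<le> real_of_int (a - 1) * cmod \<alpha> ^ i"
proof -
  have r: "cmod \<alpha> < 1" "cmod \<alpha> \<ge> 0" using alpha_lt1 by auto
  have "cmod \<alpha> ^ (i + 2) \<le> cmod \<alpha> ^ i" using r by (intro power_decreasing) auto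
  moreover have "real_of_int \<bar>c\<bar> \<le> real_of_int (a - 1)" using assms by linarith
  ultimately have "real_of_int \<bar>c\<bar> * cmod \<alpha> ^ (i + 2) \<le> real_of_int (a - 1) * cmod \<alpha> ^ i"
    using r by (intro mult_mono) auto
  then show ?thesis by (simp add: norm_mult norm_power)
qed

lemma geo_summable: "summable (\<lambda>i. real_of_int (a - 1) * cmod \<alpha> ^ i)"
  using alpha_lt1 by (intro summable_mult summable_geometric) auto

lemma Rs_summable:
  assumes "\<And>i. \<bar>u (i + 2)\<bar> \<le> a - 1"
  shows "summable (\<lambda>i. of_int (u (i + 2)) * \<alpha> ^ (i + 2))"
  by (rule summable_comparison_test[OF _ geo_summable]) (use term_bound assms in auto)

lemma tail_bound:
  assumes u: "\<And>i. 0 \<le> u (i + 2) \<and> u (i + 2) \<le> a - 1"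
    and v: "\<And>i. 0 \<le> v (i + 2) \<and> v (i + 2) \<le> a - 1"
    and eq: "\<And>i. i < L \<Longrightarrow> u (i + 2) = v (i + 2)"
  shows "norm (Rs \<alpha> u - Rs \<alpha> v) \<le> real_of_int (a - 1) * cmod \<alpha> ^ L / (1 - cmod \<alpha>)"
proof -
  define r where "r = cmod \<alpha>"
  have r: "r < 1" "r \<ge> 0" using alpha_lt1 unfolding r_def by auto
  have su: "summable (\<lambda>i. of_int (u (i + 2)) * \<alpha> ^ (i + 2))"
    by (rule Rs_summable) (use u in \<open>simp add: abs_le_iff\<close>)
  have sv: "summable (\<lambda>i. of_int (v (i + 2)) * \<alpha> ^ (i + 2))"
    by (rule Rs_summable) (use v in \<open>simp add: abs_le_iff\<close>)
  have d: "Rs \<alpha> u - Rs \<alpha> v = (\<Sum>i. of_int (u (i + 2) - v (i + 2)) * \<alpha> ^ (i + 2))"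
    unfolding Rs_def suminf_diff[OF su sv] by (simp add: algebra_simps)
  define G where "G = (\<lambda>i. if i < L then 0 else real_of_int (a - 1) * r ^ i)"
  have Gs: "G sums (real_of_int (a - 1) * r ^ L / (1 - r))"
  proof -
    have "(\<lambda>i. real_of_int (a - 1) * r ^ L * r ^ i) sums (real_of_int (a - 1) * r ^ L * (1 / (1 - r)))"
      using r by (intro sums_mult geometric_sums) auto
    then have "(\<lambda>i. G (i + L)) sums (real_of_int (a - 1) * r ^ L / (1 - r))"
      unfolding G_def by (simp add: power_add algebra_simps diff_divide_distrib)
    then have "G sums (real_of_int (a - 1) * r ^ L / (1 - r) + (\<Sum>i<L. G i))"
      by (simp only: sums_iff_shift)
    moreover have "(\<Sum>i<L. G i) = 0" unfolding G_def by simp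
    ultimately show ?thesis by simp
  qed
  have "norm (\<Sum>i. of_int (u (i + 2) - v (i + 2)) * \<alpha> ^ (i + 2)) \<le> suminf G"
  proof (rule norm_suminf_le)
    fix i
    show "norm (of_int (u (i + 2) - v (i + 2)) * \<alpha> ^ (i + 2)) \<le> G i"
    proof (cases "i < L")
      case True then show ?thesis using eq unfolding G_def by simp
    next
      case False
      have "\<bar>u (i + 2) - v (i + 2)\<bar> \<le> a - 1" using u[of i] v[of i] by linarith
      from term_bound[OF this, of i] show ?thesis using False unfolding G_def r_def by (simp del: of_int_diff)
    qed
  next
    show "summable G" using Gs by (rule sums_summable)
  qed
  then show ?thesis using d sums_unique[OF Gs] unfolding r_def by simp
qed



lemma sum_zero_beyond:
  fixes c :: "nat \<Rightarrow> int" and g :: "nat \<Rightarrow> complex"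
  assumes "\<forall>j\<ge>n. c j = 0" "\<forall>j\<ge>m. c j = 0"
  shows "(\<Sum>j<n. of_int (c j) * g j) = (\<Sum>j<m. of_int (c j) * (g j :: complex))"
proof -
  have *: "(\<Sum>j<q. of_int (c j) * g j) = (\<Sum>j<p. of_int (c j) * (g j :: complex))"
    if "p \<le> q" "\<forall>j\<ge>p. c j = 0" for p q
  proof (rule sum.mono_neutral_right)
    show "finite {..<q}" by simp
    show "{..<p} \<subseteq> {..<q}" using that(1) by auto
    show "\<forall>i\<in>{..<q} - {..<p}. of_int (c i) * g i = 0" using that(2) by auto
  qed
  show ?thesis
  proof (cases "n \<le> m")
    case True then show ?thesis using *[of n m] assms by simp
  next
    case False then show ?thesis using *[of m n] assms by simp
  qed
qed

lemma delta_image':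
  assumes "\<forall>j\<ge>n. Tdigits a b N j = 0"
  shows "fm b \<alpha> (delta a b \<beta> N) = (\<Sum>j<n. of_int (Tdigits a b N j) * \<alpha> ^ (j + 2))"
proof -
  obtain m where m: "\<forall>j\<ge>m. Tdigits a b N j = 0"
    "fm b \<alpha> (delta a b \<beta> N) = (\<Sum>j<m. of_int (Tdigits a b N j) * \<alpha> ^ (j + 2))"
    using delta_image by blast
  show ?thesis using m sum_zero_beyond[OF assms m(1)] by simp
qed

lemma image_sub: "fm b \<alpha> ` {delta a b \<beta> N | N. N \<ge> 1} \<subseteq> Rauzy a b \<alpha>"
proof
  fix z assume "z \<in> fm b \<alpha> ` {delta a b \<beta> N | N. N \<ge> 1}"
  then obtain N where z: "z = fm b \<alpha> (delta a b \<beta> N)" by auto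
  obtain n where n: "\<forall>j\<ge>n. Tdigits a b N j = 0"
    "fm b \<alpha> (delta a b \<beta> N) = (\<Sum>j<n. of_int (Tdigits a b N j) * \<alpha> ^ (j + 2))"
    using delta_image by blast
  have "admissible a b 0 (Tdigits a b N)" using Tdigits_Trep[OF ab1 ab2] unfolding Trep_def by auto
  then show "z \<in> Rauzy a b \<alpha>" using in_Rauzy n z by simp
qed

lemma Rauzy_sub_closure: "Rauzy a b \<alpha> \<subseteq> closure (fm b \<alpha> ` {delta a b \<beta> N | N. N \<ge> 1})"
proof
  fix z assume "z \<in> Rauzy a b \<alpha>"
  then obtain e where ade: "admissible a b 2 e" and z: "z = (\<Sum>i. of_int (e (i + 2)) * \<alpha> ^ (i + 2))"
    unfolding Rauzy_def by auto
  have er: "0 \<le> e (i + 2) \<and> e (i + 2) \<le> a - 1" for i using ade unfolding admissible_def by auto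
  define D where "D = (\<lambda>n j. if j \<le> n then e (j + 2) else if j = Suc n then 1 else (0::int))"
  have a3: "a \<ge> 3" using ab1 ab2 by linarith
  have adD: "admissible a b 0 (D n)" for n
    unfolding admissible_def
  proof (intro conjI allI impI)
    fix j :: nat assume "0 \<le> j"
    show "0 \<le> D n j" "D n j \<le> a - 1" using er[of j] a3 unfolding D_def by auto
  next
    fix j k :: nat assume jk: "0 + k \<le> j"
    show "lex_le (\<lambda>i. D n (j - i)) (cmpword a b) k"
    proof (cases "j \<le> n")
      case True
      have adl: "\<forall>j k. 2 + k \<le> j \<longrightarrow> lex_le (\<lambda>i. e (j - i)) (cmpword a b) k"
        using ade unfolding admissible_def by blast
      have "2 + k \<le> j + 2" using jk by simp
      from adl[rule_format, OF this] have L: "lex_le (\<lambda>i. e (j + 2 - i)) (cmpword a b) k" .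
      have "e (j + 2 - i) = D n (j - i)" if "i \<le> k" for i
      proof -
        have "j - i \<le> n" "j + 2 - i = (j - i) + 2" using jk True that by auto
        then show ?thesis unfolding D_def by simp
      qed
      then show ?thesis using lex_le_cong[of k "\<lambda>i. e (j + 2 - i)" "\<lambda>i. D n (j - i)" "cmpword a b" "cmpword a b"] L by simp
    next
      case False
      have "D n j < cmpword a b 0" using False a3 unfolding D_def cmpword_def by auto
      then show ?thesis unfolding lex_le_def by (intro disjI2 exI[of _ 0]) auto
    qed
  qed
  have zD: "\<forall>j\<ge>Suc (Suc n). D n j = 0" for n unfolding D_def by auto
  define N where "N = (\<lambda>n. nat (Vd a b (D n) (Suc (Suc n))))"
  have trep: "Trep a b (N n) (D n)" for n
  proof -
    have "Vd a b (D n) (Suc (Suc n)) \<ge> 0" using adD[of n] Vd_nonneg[OF ab1 ab2, of "D n"]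
      unfolding admissible_def by auto
    then have "int (N n) = (\<Sum>j\<le>Suc n. D n j * Tseq a b j)" unfolding N_def Vd_def
      by (simp add: lessThan_Suc_atMost)
    then show ?thesis unfolding Trep_def using adD[of n] zD[of n] by (intro conjI exI[of _ "Suc n"]) auto
  qed
  have TD: "Tdigits a b (N n) = D n" for n using Tdigits_eq[OF ab1 ab2 trep] .
  have N1: "N n \<ge> 1" for n
  proof -
    have "Vd a b (D n) (Suc n) \<ge> 0" using adD[of n] Vd_nonneg[OF ab1 ab2, of "D n"]
      unfolding admissible_def by auto
    moreover have "Tseq a b (Suc n) \<ge> 1" using T_ge1[OF ab1 ab2] .
    ultimately have "Vd a b (D n) (Suc (Suc n)) \<ge> 1" by (simp add: Vd_Suc D_def)
    then show ?thesis unfolding N_def by simp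
  qed
  define x where "x = (\<lambda>n. fm b \<alpha> (delta a b \<beta> (N n)))"
  have xv: "x n = (\<Sum>j<Suc n. of_int (e (j + 2)) * \<alpha> ^ (j + 2)) + \<alpha> ^ (n + 3)" for n
  proof -
    have "x n = (\<Sum>j<Suc (Suc n). of_int (D n j) * \<alpha> ^ (j + 2))"
      unfolding x_def using delta_image'[of "Suc (Suc n)" "N n"] zD[of n] TD[of n] by simp
    also have "\<dots> = (\<Sum>j<Suc n. of_int (e (j + 2)) * \<alpha> ^ (j + 2)) + \<alpha> ^ (n + 3)"
      unfolding D_def by (simp add: numeral_eq_Suc)
    finally show ?thesis .
  qed
  have su: "summable (\<lambda>i. of_int (e (i + 2)) * \<alpha> ^ (i + 2))"
    by (rule Rs_summable) (use er in \<open>simp add: abs_le_iff\<close>)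
  have l1: "(\<lambda>n. \<Sum>j<Suc n. of_int (e (j + 2)) * \<alpha> ^ (j + 2)) \<longlonglongrightarrow> z"
    unfolding z using summable_LIMSEQ'[OF su] by (simp add: lessThan_Suc_atMost)
  have l2: "(\<lambda>n. \<alpha> ^ (n + 3)) \<longlonglongrightarrow> 0"
    using LIMSEQ_ignore_initial_segment[OF LIMSEQ_power_zero[OF alpha_lt1], of 3] .
  have "x \<longlonglongrightarrow> z + 0" unfolding xv using tendsto_add[OF l1 l2] by simp
  moreover have "\<forall>n. x n \<in> fm b \<alpha> ` {delta a b \<beta> N | N. N \<ge> 1}" unfolding x_def using N1 by blast
  ultimately show "z \<in> closure (fm b \<alpha> ` {delta a b \<beta> N | N. N \<ge> 1})"
    unfolding closure_sequential by auto
qed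



lemma Rauzy_closed: "closed (Rauzy a b \<alpha>)"
  unfolding closed_sequential_limits
proof (intro allI impI, elim conjE)
  fix x :: "nat \<Rightarrow> complex" and l0 assume xR: "\<forall>n. x n \<in> Rauzy a b \<alpha>" and xl: "x \<longlonglongrightarrow> l0"
  have "\<forall>n. \<exists>d. admissible a b 2 d \<and> x n = Rs \<alpha> d" using xR unfolding Rauzy_def Rs_def by blast
  then have "\<exists>e. \<forall>n. admissible a b 2 (e n) \<and> x n = Rs \<alpha> (e n)" by (rule choice)
  then obtain e where e0: "\<forall>n. admissible a b 2 (e n) \<and> x n = Rs \<alpha> (e n)" by blast
  have e: "\<And>n. admissible a b 2 (e n)" "\<And>n. x n = Rs \<alpha> (e n)" using e0 by auto
  have er: "0 \<le> e n (i + 2) \<and> e n (i + 2) \<le> a - 1" for n i using e(1)[of n] unfolding admissible_def by auto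
  define S where "S = real_of_int ` {0..a-1}"
  define K where "K = (PiE UNIV (\<lambda>_::nat. S))"
  have "compactin (product_topology (\<lambda>_. euclidean) UNIV) K"
    unfolding K_def compactin_PiE S_def by (simp add: finite_imp_compact)
  then have "compact K" unfolding euclidean_product_topology by simp
  then have sc: "seq_compact K" by (rule compact_imp_seq_compact)
  define g where "g = (\<lambda>n i. real_of_int (e n (i + 2)))"
  have gK: "\<forall>n. g n \<in> K" unfolding g_def K_def S_def using er by auto
  have "\<exists>l\<in>K. \<exists>r::nat\<Rightarrow>nat. strict_mono r \<and> (g \<circ> r) \<longlonglongrightarrow> l"
    using sc gK unfolding seq_compact_def by blast
  then obtain l r where lK: "l \<in> K" and r: "strict_mono r" and gl: "(g \<circ> r) \<longlonglongrightarrow> l"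
    by blast
  have lS: "l i \<in> S" for i using lK unfolding K_def by auto
  define ld where "ld = (\<lambda>i. if i < 2 then 0 else \<lfloor>l (i - 2)\<rfloor>)"
  have lld: "l i = real_of_int (ld (i + 2))" for i using lS[of i] unfolding S_def ld_def by auto
  have ldr: "0 \<le> ld (i + 2) \<and> ld (i + 2) \<le> a - 1" for i using lS[of i] unfolding S_def ld_def by auto
  have coord: "eventually (\<lambda>n. e (r n) (i + 2) = ld (i + 2)) sequentially" for i
  proof -
    have "((\<lambda>n. (g \<circ> r) n i) \<longlongrightarrow> l i) sequentially"
      by (rule continuous_on_tendsto_compose[OF continuous_on_product_coordinates gl]) auto
    then have "eventually (\<lambda>n. dist ((g \<circ> r) n i) (l i) < 1) sequentially"
      by (rule tendstoD) simp
    then show ?thesis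
    proof (rule eventually_mono)
      fix n assume "dist ((g \<circ> r) n i) (l i) < 1"
      then have "\<bar>real_of_int (e (r n) (i + 2)) - real_of_int (ld (i + 2))\<bar> < 1"
        unfolding g_def lld dist_real_def by simp
      then have "\<bar>e (r n) (i + 2) - ld (i + 2)\<bar> < 1" by linarith
      then show "e (r n) (i + 2) = ld (i + 2)" by linarith
    qed
  qed
  have coordL: "eventually (\<lambda>n. \<forall>i\<in>{..<L}. e (r n) (i + 2) = ld (i + 2)) sequentially" for L
    by (rule eventually_ball_finite) (use coord in auto)
  have adm: "admissible a b 2 ld"
    unfolding admissible_def
  proof (intro conjI allI impI)
    fix j :: nat assume "2 \<le> j"
    then obtain i where "j = i + 2" by (metis add.commute le_iff_add)
    then show "0 \<le> ld j" "ld j \<le> a - 1" using ldr by auto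
  next
    fix j k :: nat assume jk: "2 + k \<le> j"
    from coordL[of j] obtain N0 where "\<forall>n\<ge>N0. \<forall>i\<in>{..<j}. e (r n) (i + 2) = ld (i + 2)"
      unfolding eventually_sequentially by blast
    then have n: "\<forall>i\<in>{..<j}. e (r N0) (i + 2) = ld (i + 2)" by blast
    define n where "n = N0"
    have adl: "\<forall>j k. 2 + k \<le> j \<longrightarrow> lex_le (\<lambda>i. e (r n) (j - i)) (cmpword a b) k"
      using e(1)[of "r n"] unfolding admissible_def by blast
    have L: "lex_le (\<lambda>i. e (r n) (j - i)) (cmpword a b) k" using adl[rule_format, OF jk] .
    have "e (r n) (j - i) = ld (j - i)" if "i \<le> k" for i
    proof -
      have "j - i - 2 < j" "j - i = (j - i - 2) + 2" using jk that by auto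
      then have "e (r n) ((j - i - 2) + 2) = ld ((j - i - 2) + 2)" using n unfolding n_def by blast
      then show ?thesis using \<open>j - i = (j - i - 2) + 2\<close> by simp
    qed
    then show "lex_le (\<lambda>i. ld (j - i)) (cmpword a b) k"
      using lex_le_cong[of k "\<lambda>i. e (r n) (j - i)" "\<lambda>i. ld (j - i)" "cmpword a b" "cmpword a b"] L by simp
  qed
  have conv: "(\<lambda>n. Rs \<alpha> (e (r n))) \<longlonglongrightarrow> Rs \<alpha> ld"
  proof (rule tendstoI)
    fix eps :: real assume eps: "eps > 0"
    define C where "C = real_of_int (a - 1) / (1 - cmod \<alpha>)"
    have "(\<lambda>L. C * cmod \<alpha> ^ L) \<longlonglongrightarrow> C * 0"
      using alpha_lt1 by (intro tendsto_mult tendsto_const LIMSEQ_power_zero) auto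
    then have "eventually (\<lambda>L. C * cmod \<alpha> ^ L < eps) sequentially"
      using eps by (simp add: order_tendstoD(2))
    then obtain L0 where "\<forall>L\<ge>L0. C * cmod \<alpha> ^ L < eps" unfolding eventually_sequentially by blast
    then have L: "C * cmod \<alpha> ^ L0 < eps" by blast
    define L where "L = L0"
    note L = L[folded L_def]
    show "eventually (\<lambda>n. dist (Rs \<alpha> (e (r n))) (Rs \<alpha> ld) < eps) sequentially"
      using coordL[of L]
    proof (rule eventually_mono)
      fix n assume h: "\<forall>i\<in>{..<L}. e (r n) (i + 2) = ld (i + 2)"
      have "norm (Rs \<alpha> (e (r n)) - Rs \<alpha> ld) \<le> real_of_int (a - 1) * cmod \<alpha> ^ L / (1 - cmod \<alpha>)"
        by (rule tail_bound) (use er ldr h in auto)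
      also have "\<dots> = C * cmod \<alpha> ^ L" unfolding C_def by simp
      finally show "dist (Rs \<alpha> (e (r n))) (Rs \<alpha> ld) < eps" using L by (simp add: dist_norm)
    qed
  qed
  have "(x \<circ> r) \<longlonglongrightarrow> l0" using LIMSEQ_subseq_LIMSEQ[OF xl r] .
  moreover have "(x \<circ> r) = (\<lambda>n. Rs \<alpha> (e (r n)))" using e(2) by auto
  ultimately have "(\<lambda>n. Rs \<alpha> (e (r n))) \<longlonglongrightarrow> l0" by simp
  then have "l0 = Rs \<alpha> ld" using conv by (rule LIMSEQ_unique)
  then show "l0 \<in> Rauzy a b \<alpha>" unfolding Rauzy_def Rs_def mem_Collect_eq
    by (intro exI[of _ ld]) (use adm in simp)
qed



lemma main_result:
  "\<exists>f :: real \<times> real \<Rightarrow> complex. linear f \<and> bij f \<and>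
           f ` Eset a b \<beta> = Rauzy a b \<alpha> \<and>
           f ` {(real_of_int m, real_of_int n) | m n. True} =
             {of_int m + of_int n * \<alpha> | m n. True}"
proof (intro exI conjI)
  show lin: "linear (fm b \<alpha>)" by (rule fm_linear)
  show bj: "bij (fm b \<alpha>)" using fm_bij[OF im] .
  show "fm b \<alpha> ` {(real_of_int m, real_of_int n) | m n. True} = {of_int m + of_int n * \<alpha> | m n. True}"
    by (rule fm_lattice)
  have "fm b \<alpha> ` Eset a b \<beta> = closure (fm b \<alpha> ` {delta a b \<beta> N | N. N \<ge> 1})"
    unfolding Eset_def using closure_injective_linear_image[OF lin bij_is_inj[OF bj]] by simp
  also have "\<dots> = Rauzy a b \<alpha>"
  proof (rule equalityI)
    show "closure (fm b \<alpha> ` {delta a b \<beta> N | N. N \<ge> 1}) \<subseteq> Rauzy a b \<alpha>"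
      by (rule closure_minimal[OF image_sub Rauzy_closed])
    show "Rauzy a b \<alpha> \<subseteq> closure (fm b \<alpha> ` {delta a b \<beta> N | N. N \<ge> 1})"
      by (rule Rauzy_sub_closure)
  qed
  finally show "fm b \<alpha> ` Eset a b \<beta> = Rauzy a b \<alpha>" .
qed


end

theorem proposition3p3:
  fixes a b :: int and \<beta> :: real and \<alpha> :: complex
  assumes "- a + 1 \<le> b" and "b \<le> -2"
    and "\<beta> ^ 3 - of_int a * \<beta> ^ 2 - of_int b * \<beta> - 1 = 0"
    and "\<alpha> ^ 3 - of_int a * \<alpha> ^ 2 - of_int b * \<alpha> - 1 = 0"
    and "Im \<alpha> \<noteq> 0"
    and "cmod \<alpha> < \<bar>\<beta>\<bar>"
  shows "\<exists>f :: real \<times> real \<Rightarrow> complex. linear f \<and> bij f \<and>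
           f ` Eset a b \<beta> = Rauzy a b \<alpha> \<and>
           f ` {(real_of_int m, real_of_int n) | m n. True} =
             {of_int m + of_int n * \<alpha> | m n. True}"
  using main_result[OF assms] .

end
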